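(* Let $\mathbf{x}_0$ be a random vector in $\mathbb{R}^n$ with distribution $p(\mathbf{x}_0)$, let $\mathcal E:\mathbb{R}^n\to\mathbb{R}^k$ be an encoder and set $\mathbf{z}_0=\mathcal E(\mathbf{x}_0)$. Let $\mathbf{y}$ be a measurement with conditional distribution $p(\mathbf{y}\mid\mathbf{x}_0)$, and for each time $t$ let $\mathbf{z}_t=\mathbf{z}_0+\sigma_t\boldsymbol{\epsilon}_t$ with $\boldsymbol{\epsilon}_t\sim\mathcal N(\mathbf{0},\mathbf{I})$, where, given $\mathbf{x}_0$, the variables $\mathbf{y}$ and the $\mathbf{z}_t$ for different $t$ are mutually conditionally independent (so $p(\mathbf{z}_t\mid\mathbf{x}_0)=p(\mathbf{z}_t\mid\mathbf{z}_0)=\mathcal N(\mathbf{z}_t;\mathcal E(\mathbf{x}_0),\sigma_t^2\mathbf{I})$). Fix times $t_1,t_2$ and a value of $\mathbf{y}$, and suppose $\mathbf{z}_{t_1}$ is sampled from the time-marginal $p(\mathbf{z}_{t_1}\mid\mathbf{y})$. Then: (i) if $\mathbf{x}_0\sim p(\mathbf{x}_0\mid\mathbf{z}_{t_1},\mathbf{y})$ and then $\mathbf{z}_{t_2}\sim\mathcal N(\mathcal E(\mathbf{x}_0),\sigma_{t_2}^2\mathbf{I})$, i.e. $\mathbf{z}_{t_2}\sim\mathbb E_{\mathbf{x}_0\sim p(\mathbf{x}_0\mid\mathbf{z}_{t_1},\mathbf{y})}[\mathcal N(\mathcal E(\mathbf{x}_0),\sigma_{t_2}^2\mathbf{I})]$,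 then $\mathbf{z}_{t_2}$ is distributed according to $p(\mathbf{z}_{t_2}\mid\mathbf{y})$; (ii) if $\mathbf{z}_0\sim p(\mathbf{z}_0\mid\mathbf{z}_{t_1},\mathbf{y})$ and then $\mathbf{z}_{t_2}\sim\mathcal N(\mathbf{z}_0,\sigma_{t_2}^2\mathbf{I})$, i.e. $\mathbf{z}_{t_2}\sim\mathbb E_{\mathbf{z}_0\sim p(\mathbf{z}_0\mid\mathbf{z}_{t_1},\mathbf{y})}[\mathcal N(\mathbf{z}_0,\sigma_{t_2}^2\mathbf{I})]$, then $\mathbf{z}_{t_2}$ is also distributed according to $p(\mathbf{z}_{t_2}\mid\mathbf{y})$.
   Context: $\sigma_t\ge 0$ is a noise schedule (noise standard deviation at time $t$); $\mathcal N(\mathbf{m},0\cdot\mathbf{I})$ is understood as the point mass at $\mathbf{m}$. This is the latent-diffusion setting: $\mathbf{z}_t$ is the latent code of clean data perturbed by Gaussian noise of variance $\sigma_t^2$. All conditional distributions $p(\cdot\mid\cdot)$ are those of the joint distribution just described; $p(\mathbf{z}_t\mid\mathbf{y})$ is the conditional law of $\mathbf{z}_t$ given $\mathbf{y}$. *)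

theory Defs
  imports "HOL-Probability.Probability"
begin

definition std_gauss :: "(real ^ 'k) measure" where
  "std_gauss = density lborel (\<lambda>z. ennreal (\<Prod>i\<in>UNIV. std_normal_density (z $ i)))"

text \<open>N(m, s^2 I) as the law of m + s * eps, eps ~ N(0,I); for s = 0 this is the point mass at m.\<close>
definition gauss :: "real ^ 'k \<Rightarrow> real \<Rightarrow> (real ^ 'k) measure" where
  "gauss m s = distr std_gauss borel (\<lambda>e. m + s *\<^sub>R e)"

text \<open>Joint law of (x0, y, z_t) where x0 ~ P, y | x0 ~ Ky x0, z_t | x0 ~ N(E x0, s^2 I),
  with y and z_t conditionally independent given x0.\<close>
definition joint3 ::
  "(real ^ 'n) measure \<Rightarrow> 'y measure \<Rightarrow> (real ^ 'n \<Rightarrow> 'y measure) \<Rightarrow>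
   (real ^ 'n \<Rightarrow> real ^ 'k) \<Rightarrow> real \<Rightarrow> ((real ^ 'n) \<times> 'y \<times> (real ^ 'k)) measure" where
  "joint3 P MY Ky E s =
     P \<bind> (\<lambda>x. Ky x \<bind> (\<lambda>y. gauss (E x) s \<bind>
        (\<lambda>z. return (borel \<Otimes>\<^sub>M MY \<Otimes>\<^sub>M borel) (x, y, z))))"

text \<open>Q is a (regular) conditional distribution of the second component given the first
  under the joint law J on MA x MB: a Markov kernel with J = (first marginal) disintegrated by Q.\<close>
definition cond_kernel ::
  "'a measure \<Rightarrow> 'b measure \<Rightarrow> ('a \<times> 'b) measure \<Rightarrow> ('a \<Rightarrow> 'b measure) \<Rightarrow> bool" where
  "cond_kernel MA MB J Q \<longleftrightarrow>
     Q \<in> MA \<rightarrow>\<^sub>M prob_algebra MB \<and>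
     J = distr J MA fst \<bind> (\<lambda>a. distr (Q a) (MA \<Otimes>\<^sub>M MB) (\<lambda>b. (a, b)))"

end

theory Submission
  imports Defs
begin


lemma Basis_vec_real: "(Basis :: (real^'k) set) = range (\<lambda>i. axis i 1)"
  by (auto simp: Basis_vec_def)

lemma std_gauss_prob: "prob_space (std_gauss :: (real^'k) measure)"
proof
  have "emeasure (std_gauss :: (real^'k) measure) (space std_gauss)
     = (\<integral>\<^sup>+z. (\<Prod>i\<in>UNIV. ennreal (std_normal_density ((z::real^'k) $ i))) \<partial>lborel)"
    unfolding std_gauss_def
    by (simp add: emeasure_density prod_ennreal)
  also have "\<dots> = (\<integral>\<^sup>+z. (\<Prod>b\<in>Basis. ennreal (std_normal_density ((z::real^'k) \<bullet> b))) \<partial>lborel)"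
  proof (intro nn_integral_cong)
    fix z :: "real^'k"
    have inj: "inj (\<lambda>i::'k. axis i (1::real))"
      by (auto simp: inj_def axis_eq_axis)
    show "(\<Prod>i\<in>UNIV. ennreal (std_normal_density (z $ i))) = (\<Prod>b\<in>Basis. ennreal (std_normal_density (z \<bullet> b)))"
      unfolding Basis_vec_real
      by (subst prod.reindex[OF inj]) (simp add: inner_axis)
  qed
  also have "\<dots> = (\<Prod>b\<in>(Basis::(real^'k) set). (\<integral>\<^sup>+x. ennreal (std_normal_density x) \<partial>lborel))"
    by (rule nn_integral_lborel_prod) auto
  also have "(\<integral>\<^sup>+x. ennreal (std_normal_density x) \<partial>lborel) = 1"
  proof -
    have "emeasure (density lborel (std_normal_density)) UNIV = 1"
      using prob_space.emeasure_space_1[OF prob_space_normal_density[of 1 0]] by (simp add: space_density)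
    then show ?thesis by (subst (asm) emeasure_density) auto
  qed
  finally show "emeasure (std_gauss :: (real^'k) measure) (space std_gauss) = 1" by simp
qed

lemma sets_std_gauss[simp, measurable_cong]: "sets std_gauss = sets borel"
  by (simp add: std_gauss_def)

lemma std_gauss_space: "std_gauss \<in> space (prob_algebra borel)"
  by (simp add: space_prob_algebra std_gauss_prob)

lemma gauss_measurable[measurable]: "(\<lambda>m. gauss m s) \<in> borel \<rightarrow>\<^sub>M prob_algebra (borel :: (real^'k) measure)"
  unfolding gauss_def
  by (rule measurable_distr_prob_space2[OF measurable_const[OF std_gauss_space]]) simp




lemma countable_Int_basis:
  obtains E :: "'b::second_countable_topology set set"
  where "countable E" "Int_stable E" "UNIV \<in> E" "sets (borel::'b measure) = sigma_sets UNIV E"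
proof -
  obtain B :: "'b set set" where B: "countable B" "topological_basis B"
    using ex_countable_basis by blast
  define E where "E = Inter ` {F. finite F \<and> F \<subseteq> B}"
  have cE: "countable E" unfolding E_def
    by (intro countable_image countable_Collect_finite_subset B(1))
  have iE: "Int_stable E" unfolding E_def Int_stable_def
  proof safe
    fix F G assume "F \<subseteq> B" "finite F" "G \<subseteq> B" "finite G"
    then show "\<Inter>F \<inter> \<Inter>G \<in> Inter ` {F. finite F \<and> F \<subseteq> B}"
      by (intro image_eqI[of _ _ "F \<union> G"]) auto
  qed
  have uE: "UNIV \<in> E" unfolding E_def by (intro image_eqI[of _ _ "{}"]) auto
  have tE: "topological_basis E"
    unfolding topological_basis_def
  proof safe
    fix b assume "b \<in> E"
    then obtain F where "F \<subseteq> B" "finite F" "b = \<Inter>F" unfolding E_def by auto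
    then show "open b" using topological_basis_open[OF B(2)] by (auto intro!: open_Inter)
  next
    fix x :: "'b set" assume "open x"
    then obtain B' where "B' \<subseteq> B" "\<Union>B' = x" using B(2) unfolding topological_basis_def by blast
    moreover have "B \<subseteq> E" unfolding E_def
    proof
      fix b assume "b \<in> B" then show "b \<in> Inter ` {F. finite F \<and> F \<subseteq> B}"
        by (intro image_eqI[of _ _ "{b}"]) auto
    qed
    ultimately show "\<exists>B'\<subseteq>E. \<Union>B' = x" by blast
  qed
  have "sets (borel::'b measure) = sigma_sets UNIV E"
    by (subst borel_eq_countable_basis[OF cE tE]) simp
  then show ?thesis using that cE iE uE by blast
qed

lemma disint_unique:
  fixes K1 K2 :: "'a \<Rightarrow> 'b::second_countable_topology measure"
  assumes mu: "prob_space \<mu>" "sets \<mu> = sets MA"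
    and K1[measurable]: "K1 \<in> MA \<rightarrow>\<^sub>M prob_algebra borel"
    and K2[measurable]: "K2 \<in> MA \<rightarrow>\<^sub>M prob_algebra borel"
    and eq: "\<mu> \<bind> (\<lambda>a. distr (K1 a) (MA \<Otimes>\<^sub>M borel) (\<lambda>b. (a, b)))
           = \<mu> \<bind> (\<lambda>a. distr (K2 a) (MA \<Otimes>\<^sub>M borel) (\<lambda>b. (a, b)))"
  shows "AE a in \<mu>. K1 a = K2 a"
proof -
  have muS: "\<mu> \<in> space (prob_algebra MA)" using mu by (simp add: space_prob_algebra)
  have spmu: "space \<mu> = space MA" using mu(2) by (rule sets_eq_imp_space_eq)
  have int: "emeasure (\<mu> \<bind> (\<lambda>a. distr (K a) (MA \<Otimes>\<^sub>M borel) (\<lambda>b. (a, b)))) (A \<times> B)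
        = (\<integral>\<^sup>+a. emeasure (K a) B * indicator A a \<partial>\<mu>)"
    if K[measurable]: "K \<in> MA \<rightarrow>\<^sub>M prob_algebra borel" and A: "A \<in> sets MA" and B: "B \<in> sets borel"
    for K A B
  proof -
    have L: "(\<lambda>a. distr (K a) (MA \<Otimes>\<^sub>M borel) (\<lambda>b. (a, b))) \<in> MA \<rightarrow>\<^sub>M prob_algebra (MA \<Otimes>\<^sub>M borel)"
      by measurable
    have "emeasure (\<mu> \<bind> (\<lambda>a. distr (K a) (MA \<Otimes>\<^sub>M borel) (\<lambda>b. (a, b)))) (A \<times> B)
       = (\<integral>\<^sup>+a. emeasure (distr (K a) (MA \<Otimes>\<^sub>M borel) (\<lambda>b. (a, b))) (A \<times> B) \<partial>\<mu>)"
      by (rule emeasure_bind_prob_algebra[OF muS L]) (use A B in auto)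
    also have "\<dots> = (\<integral>\<^sup>+a. emeasure (K a) B * indicator A a \<partial>\<mu>)"
    proof (intro nn_integral_cong)
      fix a assume "a \<in> space \<mu>"
      then have a: "a \<in> space MA" using spmu by simp
      have Ka: "K a \<in> space (prob_algebra borel)" using measurable_space[OF K a] .
      then have sK: "sets (K a) = sets borel" by (simp add: space_prob_algebra)
      have "emeasure (distr (K a) (MA \<Otimes>\<^sub>M borel) (\<lambda>b. (a, b))) (A \<times> B)
          = emeasure (K a) ((\<lambda>b. (a, b)) -` (A \<times> B) \<inter> space (K a))"
        using A B a by (intro emeasure_distr) (auto simp: measurable_cong_sets[OF sK refl])
      also have "\<dots> = emeasure (K a) B * indicator A a"
        using sets_eq_imp_space_eq[OF sK] by (auto split: split_indicator)
      finally show "emeasure (distr (K a) (MA \<Otimes>\<^sub>M borel) (\<lambda>b. (a, b))) (A \<times> B) = emeasure (K a) B * indicator A a" .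
    qed
    finally show ?thesis .
  qed
  have each: "AE a in \<mu>. emeasure (K1 a) B = emeasure (K2 a) B" if B: "B \<in> sets borel" for B
  proof -
    have m1: "(\<lambda>a. emeasure (K1 a) B) \<in> borel_measurable \<mu>"
      using measurable_compose[OF measurable_prob_algebraD[OF K1] measurable_emeasure_subprob_algebra[OF B]]
      by (simp add: measurable_cong_sets[OF mu(2) refl])
    have m2: "(\<lambda>a. emeasure (K2 a) B) \<in> borel_measurable \<mu>"
      using measurable_compose[OF measurable_prob_algebraD[OF K2] measurable_emeasure_subprob_algebra[OF B]]
      by (simp add: measurable_cong_sets[OF mu(2) refl])
    have "(\<integral>\<^sup>+a. emeasure (K1 a) B \<partial>\<mu>) \<le> (\<integral>\<^sup>+a. 1 \<partial>\<mu>)"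
    proof (intro nn_integral_mono)
      fix a assume "a \<in> space \<mu>"
      then have "K1 a \<in> space (prob_algebra borel)" using measurable_space[OF K1] spmu by auto
      then have "prob_space (K1 a)" by (simp add: space_prob_algebra)
      then show "emeasure (K1 a) B \<le> 1" by (rule prob_space.emeasure_le_1)
    qed
    also have "\<dots> = 1" using prob_space.emeasure_space_1[OF mu(1)] by simp
    finally have fin: "(\<integral>\<^sup>+a. emeasure (K1 a) B \<partial>\<mu>) \<noteq> \<infinity>" by (auto simp: top_unique)
    have "density \<mu> (\<lambda>a. emeasure (K1 a) B) = density \<mu> (\<lambda>a. emeasure (K2 a) B)"
    proof (rule measure_eqI)
      fix A assume "A \<in> sets (density \<mu> (\<lambda>a. emeasure (K1 a) B))"
      then have A: "A \<in> sets MA" using mu(2) by simp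
      show "emeasure (density \<mu> (\<lambda>a. emeasure (K1 a) B)) A = emeasure (density \<mu> (\<lambda>a. emeasure (K2 a) B)) A"
        using int[OF K1 A B] int[OF K2 A B] eq A mu(2) m1 m2
        by (simp add: emeasure_density)
    qed simp
    then show ?thesis
      using finite_density_unique[OF m1 m2 _ _ fin] by simp
  qed
  obtain E :: "'b set set" where E: "countable E" "Int_stable E" "UNIV \<in> E"
      "sets (borel::'b measure) = sigma_sets UNIV E"
    using countable_Int_basis by blast
  have EB: "e \<in> sets borel" if "e \<in> E" for e using that E(4) by auto
  have "AE a in \<mu>. \<forall>e\<in>E. emeasure (K1 a) e = emeasure (K2 a) e"
    using E(1) EB each by (subst AE_ball_countable) auto
  then show ?thesis
  proof (rule AE_mp[OF _ AE_I2[OF impI]])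
    fix a assume a: "a \<in> space \<mu>" and h: "\<forall>e\<in>E. emeasure (K1 a) e = emeasure (K2 a) e"
    have "K1 a \<in> space (prob_algebra borel)" "K2 a \<in> space (prob_algebra borel)"
      using measurable_space[OF K1] measurable_space[OF K2] a spmu by auto
    then have P: "prob_space (K1 a)" "sets (K1 a) = sets borel" "sets (K2 a) = sets borel"
      by (auto simp: space_prob_algebra)
    show "K1 a = K2 a"
    proof (rule measure_eqI_generator_eq[of E UNIV _ _ "\<lambda>_. UNIV"])
      show "E \<subseteq> Pow UNIV" by simp
      show "emeasure (K1 a) UNIV \<noteq> \<infinity>" for i
        using prob_space.emeasure_space_1[OF P(1)] sets_eq_imp_space_eq[OF P(2)] by simp
    qed (use E h P in auto)
  qed
qed




lemma J_kernel[measurable]: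
  assumes [measurable]: "Ky \<in> borel \<rightarrow>\<^sub>M prob_algebra MY" "E \<in> borel_measurable borel"
  shows "(\<lambda>x. Ky x \<bind> (\<lambda>y. gauss (E x) s \<bind> (\<lambda>z. return (borel \<Otimes>\<^sub>M MY \<Otimes>\<^sub>M borel) (x, y, z))))
     \<in> (borel :: (real^'n) measure) \<rightarrow>\<^sub>M prob_algebra (borel \<Otimes>\<^sub>M MY \<Otimes>\<^sub>M (borel :: (real^'k) measure))"
  by measurable

lemma bind3:
  fixes P :: "(real ^ 'n) measure" and E :: "real ^ 'n \<Rightarrow> real ^ 'k"
  assumes P: "prob_space P" "sets P = sets borel"
    and Ky[measurable]: "Ky \<in> borel \<rightarrow>\<^sub>M prob_algebra MY"
    and E[measurable]: "E \<in> borel_measurable borel"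
    and F[measurable]: "F \<in> (borel \<Otimes>\<^sub>M MY \<Otimes>\<^sub>M borel) \<rightarrow>\<^sub>M prob_algebra N"
  shows "joint3 P MY Ky E s \<bind> F = P \<bind> (\<lambda>x. Ky x \<bind> (\<lambda>y. gauss (E x) s \<bind> (\<lambda>z. F (x, y, z))))"
proof -
  let ?M3 = "borel \<Otimes>\<^sub>M MY \<Otimes>\<^sub>M (borel :: (real^'k) measure)"
  have Fs: "F \<in> ?M3 \<rightarrow>\<^sub>M subprob_algebra N" by (rule measurable_prob_algebraD[OF F])
  have Psp: "space P = space borel" using P(2) by (rule sets_eq_imp_space_eq)
  have "joint3 P MY Ky E s \<bind> F = P \<bind> (\<lambda>x. (Ky x \<bind> (\<lambda>y. gauss (E x) s \<bind> (\<lambda>z. return ?M3 (x, y, z)))) \<bind> F)"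
    unfolding joint3_def
    by (rule bind_assoc[OF _ Fs]) (simp add: measurable_cong_sets[OF P(2) refl] measurable_prob_algebraD)
  also have "\<dots> = P \<bind> (\<lambda>x. Ky x \<bind> (\<lambda>y. gauss (E x) s \<bind> (\<lambda>z. F (x, y, z))))"
  proof (rule bind_cong[OF refl])
    fix x assume "x \<in> space P"
    then have x[measurable]: "x \<in> space borel" using Psp by simp
    have sKy: "sets (Ky x) = sets MY"
      using measurable_space[OF Ky x] by (simp add: space_prob_algebra)
    have gsp: "gauss (E x) s \<in> space (prob_algebra borel)"
      using measurable_space[OF gauss_measurable, of "E x" s] by simp
    have "(\<lambda>y. gauss (E x) s \<bind> (\<lambda>z. return ?M3 (x, y, z))) \<in> MY \<rightarrow>\<^sub>M prob_algebra ?M3"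
      by (intro measurable_bind_prob_space2[OF measurable_const[OF gsp]]) measurable
    then have inner: "(\<lambda>y. gauss (E x) s \<bind> (\<lambda>z. return ?M3 (x, y, z))) \<in> Ky x \<rightarrow>\<^sub>M subprob_algebra ?M3"
      by (simp add: measurable_cong_sets[OF sKy refl] measurable_prob_algebraD)
    have "(Ky x \<bind> (\<lambda>y. gauss (E x) s \<bind> (\<lambda>z. return ?M3 (x, y, z)))) \<bind> F
        = Ky x \<bind> (\<lambda>y. (gauss (E x) s \<bind> (\<lambda>z. return ?M3 (x, y, z))) \<bind> F)"
      by (rule bind_assoc[OF inner Fs])
    also have "\<dots> = Ky x \<bind> (\<lambda>y. gauss (E x) s \<bind> (\<lambda>z. F (x, y, z)))"
    proof (rule bind_cong[OF refl])
      fix y assume "y \<in> space (Ky x)"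
      then have y[measurable]: "y \<in> space MY"
        using measurable_space[OF Ky x] by (auto simp: space_prob_algebra dest: sets_eq_imp_space_eq)
      have "(gauss (E x) s \<bind> (\<lambda>z. return ?M3 (x, y, z))) \<bind> F
          = gauss (E x) s \<bind> (\<lambda>z. return ?M3 (x, y, z) \<bind> F)"
      proof (rule bind_assoc[OF _ Fs])
        have sg: "sets (gauss (E x) s) = sets borel" using gsp by (simp add: space_prob_algebra)
        have "(\<lambda>z. return ?M3 (x, y, z)) \<in> borel \<rightarrow>\<^sub>M subprob_algebra ?M3" by measurable
        then show "(\<lambda>z. return ?M3 (x, y, z)) \<in> gauss (E x) s \<rightarrow>\<^sub>M subprob_algebra ?M3"
          by (simp add: measurable_cong_sets[OF sg refl])
      qed
      also have "\<dots> = gauss (E x) s \<bind> (\<lambda>z. F (x, y, z))"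
      proof (rule bind_cong[OF refl])
        fix z assume "z \<in> space (gauss (E x) s)"
        then have "z \<in> space borel" by (simp add: gauss_def)
        then show "return ?M3 (x, y, z) \<bind> F = F (x, y, z)"
          using x y by (intro bind_return[OF Fs]) (auto simp: space_pair_measure)
      qed
      finally show "(gauss (E x) s \<bind> (\<lambda>z. return ?M3 (x, y, z))) \<bind> F = gauss (E x) s \<bind> (\<lambda>z. F (x, y, z))" .
    qed
    finally show "(Ky x \<bind> (\<lambda>y. gauss (E x) s \<bind> (\<lambda>z. return ?M3 (x, y, z)))) \<bind> F
        = Ky x \<bind> (\<lambda>y. gauss (E x) s \<bind> (\<lambda>z. F (x, y, z)))" .
  qed
  finally show ?thesis .
qed




lemma bind_distr':
  assumes "f \<in> N0 \<rightarrow>\<^sub>M X" "sets M = sets N0" "K \<in> X \<rightarrow>\<^sub>M prob_algebra Y" "space M \<noteq> {}"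
  shows "distr M X f \<bind> K = M \<bind> (\<lambda>x. K (f x))"
  using assms(1) by (intro bind_distr[OF _ measurable_prob_algebraD[OF assms(3)] assms(4)])
    (simp add: measurable_cong_sets[OF assms(2) refl])

lemma bind_assoc':
  assumes "sets M = sets N0" "A \<in> N0 \<rightarrow>\<^sub>M prob_algebra X" "B \<in> X \<rightarrow>\<^sub>M prob_algebra Y"
  shows "(M \<bind> A) \<bind> B = M \<bind> (\<lambda>x. A x \<bind> B)"
  using measurable_prob_algebraD[OF assms(2)] by (intro bind_assoc[OF _ measurable_prob_algebraD[OF assms(3)]])
    (simp add: measurable_cong_sets[OF assms(1) refl])

lemma distr_bind':
  assumes "sets M = sets N0" "space M \<noteq> {}" "A \<in> N0 \<rightarrow>\<^sub>M prob_algebra X" "f \<in> X \<rightarrow>\<^sub>M Y"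
  shows "distr (M \<bind> A) Y f = M \<bind> (\<lambda>x. distr (A x) Y f)"
  using measurable_prob_algebraD[OF assms(3)] by (intro distr_bind[OF _ assms(2) assms(4)])
    (simp add: measurable_cong_sets[OF assms(1) refl])

lemma in_prob_algebra:
  assumes "K \<in> M \<rightarrow>\<^sub>M prob_algebra N" "x \<in> space M"
  shows "prob_space (K x)" "sets (K x) = sets N" "space (K x) = space N" "space (K x) \<noteq> {}"
proof -
  have "K x \<in> space (prob_algebra N)" by (rule measurable_space[OF assms])
  then show p: "prob_space (K x)" and s: "sets (K x) = sets N" by (auto simp: space_prob_algebra)
  show "space (K x) = space N" using s by (rule sets_eq_imp_space_eq)
  show "space (K x) \<noteq> {}" using p by (rule prob_space.not_empty)
qed

lemma main_generic:
  fixes P :: "(real ^ 'n) measure"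
    and MY :: "'y measure"
    and Ky :: "real ^ 'n \<Rightarrow> 'y measure"
    and E :: "real ^ 'n \<Rightarrow> real ^ 'k"
    and Q1 Q2 :: "'y \<Rightarrow> (real ^ 'k) measure"
    and f :: "real ^ 'n \<Rightarrow> 'w" and MW :: "'w measure" and H :: "'w \<Rightarrow> (real ^ 'k) measure"
    and R :: "(real ^ 'k) \<times> 'y \<Rightarrow> 'w measure"
  assumes P: "prob_space P" "sets P = sets borel"
    and Ky[measurable]: "Ky \<in> borel \<rightarrow>\<^sub>M prob_algebra MY"
    and E[measurable]: "E \<in> borel_measurable borel"
    and f[measurable]: "f \<in> borel \<rightarrow>\<^sub>M MW"
    and H[measurable]: "H \<in> MW \<rightarrow>\<^sub>M prob_algebra borel"
    and Hf: "\<And>x. H (f x) = gauss (E x) s2"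
    and Q1: "cond_kernel MY borel
               (distr (joint3 P MY Ky E s1) (MY \<Otimes>\<^sub>M borel) (\<lambda>(x, y, z). (y, z))) Q1"
    and Q2: "cond_kernel MY borel
               (distr (joint3 P MY Ky E s2) (MY \<Otimes>\<^sub>M borel) (\<lambda>(x, y, z). (y, z))) Q2"
    and R: "cond_kernel (borel \<Otimes>\<^sub>M MY) MW
              (distr (joint3 P MY Ky E s1) ((borel \<Otimes>\<^sub>M MY) \<Otimes>\<^sub>M MW)
                 (\<lambda>(x, y, z). ((z, y), f x))) R"
  shows "AE y in P \<bind> Ky. (Q1 y \<bind> (\<lambda>z1. R (z1, y) \<bind> H)) = Q2 y"
proof -
  let ?M3 = "borel \<Otimes>\<^sub>M MY \<Otimes>\<^sub>M (borel :: (real^'k) measure)"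
  let ?\<mu> = "P \<bind> Ky"
  have Psp: "P \<in> space (prob_algebra borel)" using P by (simp add: space_prob_algebra)
  have Jsp: "joint3 P MY Ky E s \<in> space (prob_algebra ?M3)" for s
    unfolding joint3_def space_prob_algebra
    using prob_space_bind'[OF Psp J_kernel[OF Ky E]] sets_bind'[OF Psp J_kernel[OF Ky E]] by simp
  have musp: "?\<mu> \<in> space (prob_algebra MY)"
    using prob_space_bind'[OF Psp Ky] sets_bind'[OF Psp Ky] by (simp add: space_prob_algebra)
  have Jne: "space (joint3 P MY Ky E s) \<noteq> {}" for s
    using Jsp[of s] by (simp add: space_prob_algebra prob_space.not_empty)
  have distr3: "distr (joint3 P MY Ky E s) N g
      = P \<bind> (\<lambda>x. Ky x \<bind> (\<lambda>y. gauss (E x) s \<bind> (\<lambda>z. return N (g (x, y, z)))))"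
    if g[measurable]: "g \<in> ?M3 \<rightarrow>\<^sub>M N" for s N g
  proof -
    have "distr (joint3 P MY Ky E s) N g = joint3 P MY Ky E s \<bind> (\<lambda>p. return N (g p))"
    proof (rule bind_return_distr'[symmetric, OF Jne])
      have sJ: "sets (joint3 P MY Ky E s) = sets ?M3" using Jsp[of s] by (simp add: space_prob_algebra)
      show "g \<in> joint3 P MY Ky E s \<rightarrow>\<^sub>M N" using g by (simp only: measurable_cong_sets[OF sJ refl])
    qed
    also have "\<dots> = P \<bind> (\<lambda>x. Ky x \<bind> (\<lambda>y. gauss (E x) s \<bind> (\<lambda>z. return N (g (x, y, z)))))"
      by (rule bind3[OF P Ky E]) (rule measurable_compose[OF g measurable_return_prob_space])
    finally show ?thesis .
  qed
  have sJ: "sets (joint3 P MY Ky E s) = sets ?M3" for s using Jsp[of s] by (simp add: space_prob_algebra)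
  have Psp': "space P = space borel" using P(2) by (rule sets_eq_imp_space_eq)
  have marg: "distr (distr (joint3 P MY Ky E s) (MY \<Otimes>\<^sub>M borel) (\<lambda>(x, y, z). (y, z))) MY fst = ?\<mu>" for s
  proof -
    have "distr (distr (joint3 P MY Ky E s) (MY \<Otimes>\<^sub>M borel) (\<lambda>(x, y, z). (y, z))) MY fst
        = distr (joint3 P MY Ky E s) MY (fst \<circ> (\<lambda>(x, y, z). (y, z)))"
      apply (rule distr_distr)
      subgoal by measurable
      subgoal unfolding measurable_cong_sets[OF sJ refl] by measurable
      done
    also have "\<dots> = P \<bind> (\<lambda>x. Ky x \<bind> (\<lambda>y. gauss (E x) s \<bind> (\<lambda>z. return MY y)))"
    proof -
      have gm: "fst \<circ> (\<lambda>(x, y, z). (y, z)) \<in> ?M3 \<rightarrow>\<^sub>M MY"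
        by (rule measurable_comp[where N="MY \<Otimes>\<^sub>M borel"]) measurable
      show ?thesis by (subst distr3[OF gm]) (simp add: comp_def)
    qed
    also have "\<dots> = P \<bind> (\<lambda>x. Ky x)"
    proof (rule bind_cong[OF refl])
      fix x assume "x \<in> space P"
      then have x: "x \<in> space borel" using Psp' by simp
      have sKy: "sets (Ky x) = sets MY"
        using measurable_space[OF Ky x] by (simp add: space_prob_algebra)
      have gp: "prob_space (gauss (E x) s)"
        using measurable_space[OF gauss_measurable, of "E x" s] by (simp add: space_prob_algebra)
      have "Ky x \<bind> (\<lambda>y. gauss (E x) s \<bind> (\<lambda>z. return MY y)) = Ky x \<bind> return MY"
      proof (rule bind_cong[OF refl])
        fix y assume "y \<in> space (Ky x)"
        then have "y \<in> space MY" using sets_eq_imp_space_eq[OF sKy] by simp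
        then show "gauss (E x) s \<bind> (\<lambda>z. return MY y) = return MY y"
          by (intro bind_const' gp prob_space_imp_subprob_space prob_space_return)
      qed
      also have "\<dots> = Ky x" by (rule bind_return''[OF sKy])
      finally show "Ky x \<bind> (\<lambda>y. gauss (E x) s \<bind> (\<lambda>z. return MY y)) = Ky x" .
    qed
    finally show ?thesis by simp
  qed

  let ?J1 = "joint3 P MY Ky E s1" and ?J2 = "joint3 P MY Ky E s2"
  have sP: "sets P = sets (borel :: (real^'n) measure)" by (rule P(2))
  have smu: "sets ?\<mu> = sets MY" using musp by (simp add: space_prob_algebra)
  have mune: "space ?\<mu> \<noteq> {}" using musp by (simp add: space_prob_algebra prob_space.not_empty)
  have spmu: "space ?\<mu> = space MY" using smu by (rule sets_eq_imp_space_eq)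
  from Q1 have Q1m[measurable]: "Q1 \<in> MY \<rightarrow>\<^sub>M prob_algebra borel"
    and D1: "distr ?J1 (MY \<Otimes>\<^sub>M borel) (\<lambda>(x, y, z). (y, z))
        = ?\<mu> \<bind> (\<lambda>a. distr (Q1 a) (MY \<Otimes>\<^sub>M borel) (\<lambda>b. (a, b)))"
    unfolding cond_kernel_def marg by auto
  from Q2 have Q2m[measurable]: "Q2 \<in> MY \<rightarrow>\<^sub>M prob_algebra borel"
    and D2: "distr ?J2 (MY \<Otimes>\<^sub>M borel) (\<lambda>(x, y, z). (y, z))
        = ?\<mu> \<bind> (\<lambda>a. distr (Q2 a) (MY \<Otimes>\<^sub>M borel) (\<lambda>b. (a, b)))"
    unfolding cond_kernel_def marg by auto
  let ?T = "distr ?J1 ((borel \<Otimes>\<^sub>M MY) \<Otimes>\<^sub>M MW) (\<lambda>(x, y, z). ((z, y), f x))"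
  let ?\<nu> = "distr ?T (borel \<Otimes>\<^sub>M MY) fst"
  from R have Rm[measurable]: "R \<in> (borel \<Otimes>\<^sub>M MY) \<rightarrow>\<^sub>M prob_algebra MW"
    and Teq: "?T = ?\<nu> \<bind> (\<lambda>a. distr (R a) ((borel \<Otimes>\<^sub>M MY) \<Otimes>\<^sub>M MW) (\<lambda>b. (a, b)))"
    unfolding cond_kernel_def by auto
  define Psi where "Psi = (\<lambda>(y, w). distr (H w) (MY \<Otimes>\<^sub>M borel) (\<lambda>z. (y, z)))"
  have Psim[measurable]: "Psi \<in> MY \<Otimes>\<^sub>M MW \<rightarrow>\<^sub>M prob_algebra (MY \<Otimes>\<^sub>M borel)"
    unfolding Psi_def by measurable
  let ?L = "distr ?J1 (MY \<Otimes>\<^sub>M MW) (\<lambda>(x, y, z). (y, f x))"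
  define K' where "K' = (\<lambda>y. Q1 y \<bind> (\<lambda>z1. R (z1, y) \<bind> H))"
  have K'm[measurable]: "K' \<in> MY \<rightarrow>\<^sub>M prob_algebra borel"
    unfolding K'_def by measurable
  have chainA: "?L \<bind> Psi = distr ?J2 (MY \<Otimes>\<^sub>M borel) (\<lambda>(x, y, z). (y, z))"
  proof -
    have gLm: "(\<lambda>(x, y, z). (y, f x)) \<in> ?M3 \<rightarrow>\<^sub>M MY \<Otimes>\<^sub>M MW" by measurable
    have F: "(\<lambda>p. Psi ((\<lambda>(x, y, z). (y, f x)) p)) \<in> ?M3 \<rightarrow>\<^sub>M prob_algebra (MY \<Otimes>\<^sub>M borel)"
      by measurable
    have "?L \<bind> Psi = ?J1 \<bind> (\<lambda>p. Psi ((\<lambda>(x, y, z). (y, f x)) p))"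
      by (rule bind_distr'[OF gLm sJ Psim Jne])
    also have "\<dots> = P \<bind> (\<lambda>x. Ky x \<bind> (\<lambda>y. gauss (E x) s1 \<bind> (\<lambda>z. Psi (y, f x))))"
      unfolding bind3[OF P Ky E F] by simp
    also have "\<dots> = P \<bind> (\<lambda>x. Ky x \<bind> (\<lambda>y. gauss (E x) s2 \<bind> (\<lambda>z. return (MY \<Otimes>\<^sub>M borel) (y, z))))"
    proof (rule bind_cong[OF refl], rule bind_cong[OF refl])
      fix x y assume x: "x \<in> space P" and y: "y \<in> space (Ky x)"
      have x': "x \<in> space borel" using x Psp' by simp
      have y': "y \<in> space MY" using y in_prob_algebra(3)[OF Ky x'] by simp
      have fx: "f x \<in> space MW" using measurable_space[OF f x'] .
      have yw: "(y, f x) \<in> space (MY \<Otimes>\<^sub>M MW)" using y' fx by (simp add: space_pair_measure)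
      have "gauss (E x) s1 \<bind> (\<lambda>z. Psi (y, f x)) = Psi (y, f x)"
        by (intro bind_const' prob_space_imp_subprob_space in_prob_algebra(1)[OF gauss_measurable]
              in_prob_algebra(1)[OF Psim yw]) simp
      also have "\<dots> = distr (gauss (E x) s2) (MY \<Otimes>\<^sub>M borel) (\<lambda>z. (y, z))"
        unfolding Psi_def by (simp add: Hf)
      also have "\<dots> = gauss (E x) s2 \<bind> (\<lambda>z. return (MY \<Otimes>\<^sub>M borel) (y, z))"
        by (rule bind_return_distr'[symmetric])
          (use in_prob_algebra[OF gauss_measurable, of "E x" s2] y' in
            \<open>simp_all add: measurable_cong_sets[OF in_prob_algebra(2)[OF gauss_measurable] refl]\<close>)
      finally show "gauss (E x) s1 \<bind> (\<lambda>z. Psi (y, f x)) = gauss (E x) s2 \<bind> (\<lambda>z. return (MY \<Otimes>\<^sub>M borel) (y, z))" .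
    qed
    also have "\<dots> = distr ?J2 (MY \<Otimes>\<^sub>M borel) (\<lambda>(x, y, z). (y, z))"
    proof -
      have gm: "(\<lambda>(x, y, z). (y, z)) \<in> ?M3 \<rightarrow>\<^sub>M MY \<Otimes>\<^sub>M borel" by measurable
      show ?thesis by (subst distr3[OF gm]) simp
    qed
    finally show ?thesis .
  qed
  have chainB: "?L \<bind> Psi = ?\<mu> \<bind> (\<lambda>y. distr (K' y) (MY \<Otimes>\<^sub>M borel) (\<lambda>z. (y, z)))"
  proof -
    have Jp: "prob_space ?J1" using Jsp[of s1] by (simp add: space_prob_algebra)
    have gTm: "(\<lambda>(x, y, z). ((z, y), f x)) \<in> ?J1 \<rightarrow>\<^sub>M (borel \<Otimes>\<^sub>M MY) \<Otimes>\<^sub>M MW"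
      unfolding measurable_cong_sets[OF sJ refl] by measurable
    have gDm: "(\<lambda>(x, y, z). (y, z)) \<in> ?J1 \<rightarrow>\<^sub>M MY \<Otimes>\<^sub>M borel"
      unfolding measurable_cong_sets[OF sJ refl] by measurable
    have hm: "(\<lambda>p. (snd (fst p), snd p)) \<in> (borel \<Otimes>\<^sub>M MY) \<Otimes>\<^sub>M MW \<rightarrow>\<^sub>M MY \<Otimes>\<^sub>M MW" by measurable
    have swm: "(\<lambda>(y, z). (z, y)) \<in> MY \<Otimes>\<^sub>M borel \<rightarrow>\<^sub>M borel \<Otimes>\<^sub>M MY" by measurable
    have Tne: "space ?T \<noteq> {}"
      using prob_space.not_empty[OF prob_space.prob_space_distr[OF Jp gTm]] .
    have D1ne: "space (distr ?J1 (MY \<Otimes>\<^sub>M borel) (\<lambda>(x, y, z). (y, z))) \<noteq> {}"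
      using prob_space.not_empty[OF prob_space.prob_space_distr[OF Jp gDm]] .
    define Phi where "Phi = (\<lambda>a. R a \<bind> (\<lambda>w. Psi (snd a, w)))"
    have Phim[measurable]: "Phi \<in> borel \<Otimes>\<^sub>M MY \<rightarrow>\<^sub>M prob_algebra (MY \<Otimes>\<^sub>M borel)"
      unfolding Phi_def by measurable
    have L_T: "?L = distr ?T (MY \<Otimes>\<^sub>M MW) (\<lambda>p. (snd (fst p), snd p))"
    proof -
      have "distr ?T (MY \<Otimes>\<^sub>M MW) (\<lambda>p. (snd (fst p), snd p))
          = distr ?J1 (MY \<Otimes>\<^sub>M MW) ((\<lambda>p. (snd (fst p), snd p)) \<circ> (\<lambda>(x, y, z). ((z, y), f x)))"
        by (rule distr_distr[OF hm gTm])
      also have "(\<lambda>p. (snd (fst p), snd p)) \<circ> (\<lambda>(x, y, z). ((z, y), f x)) = (\<lambda>(x, y, z). (y, f x))"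
        by (auto simp: fun_eq_iff)
      finally show ?thesis by simp
    qed
    have nu_D: "?\<nu> = distr (distr ?J1 (MY \<Otimes>\<^sub>M borel) (\<lambda>(x, y, z). (y, z))) (borel \<Otimes>\<^sub>M MY) (\<lambda>(y, z). (z, y))"
    proof -
      have "?\<nu> = distr ?J1 (borel \<Otimes>\<^sub>M MY) (fst \<circ> (\<lambda>(x, y, z). ((z, y), f x)))"
        by (rule distr_distr[OF _ gTm]) measurable
      also have "fst \<circ> (\<lambda>(x, y, z). ((z, y), f x)) = (\<lambda>(y, z). (z, y)) \<circ> (\<lambda>(x, y, z). (y, z))"
        by (auto simp: fun_eq_iff)
      also have "distr ?J1 (borel \<Otimes>\<^sub>M MY) \<dots> = distr (distr ?J1 (MY \<Otimes>\<^sub>M borel) (\<lambda>(x, y, z). (y, z))) (borel \<Otimes>\<^sub>M MY) (\<lambda>(y, z). (z, y))"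
        by (rule distr_distr[OF swm gDm, symmetric])
      finally show ?thesis .
    qed
    have "?L \<bind> Psi = ?T \<bind> (\<lambda>p. Psi ((\<lambda>p. (snd (fst p), snd p)) p))"
      unfolding L_T by (rule bind_distr'[OF hm _ Psim Tne]) simp
    also have "\<dots> = ?\<nu> \<bind> (\<lambda>a. distr (R a) ((borel \<Otimes>\<^sub>M MY) \<Otimes>\<^sub>M MW) (\<lambda>b. (a, b)) \<bind> (\<lambda>p. Psi ((\<lambda>p. (snd (fst p), snd p)) p)))"
      by (subst Teq, rule bind_assoc'[of _ "borel \<Otimes>\<^sub>M MY"]) (simp_all, measurable)
    also have "\<dots> = ?\<nu> \<bind> Phi"
    proof (rule bind_cong[OF refl])
      fix a assume "a \<in> space ?\<nu>"
      then have a: "a \<in> space (borel \<Otimes>\<^sub>M MY)" by simp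
      have "distr (R a) ((borel \<Otimes>\<^sub>M MY) \<Otimes>\<^sub>M MW) (\<lambda>b. (a, b)) \<bind> (\<lambda>p. Psi ((\<lambda>p. (snd (fst p), snd p)) p))
          = R a \<bind> (\<lambda>b. Psi ((\<lambda>p. (snd (fst p), snd p)) (a, b)))"
        by (rule bind_distr'[of _ MW]) (use a in \<open>simp_all add: in_prob_algebra[OF Rm a] in_prob_algebra(4)[OF Rm a, unfolded in_prob_algebra(3)[OF Rm a]]\<close>, measurable)
      also have "\<dots> = Phi a" unfolding Phi_def by (simp add: split_beta)
      finally show "distr (R a) ((borel \<Otimes>\<^sub>M MY) \<Otimes>\<^sub>M MW) (\<lambda>b. (a, b)) \<bind> (\<lambda>p. Psi ((\<lambda>p. (snd (fst p), snd p)) p)) = Phi a" .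
    qed
    also have "\<dots> = distr ?J1 (MY \<Otimes>\<^sub>M borel) (\<lambda>(x, y, z). (y, z)) \<bind> (\<lambda>q. Phi ((\<lambda>(y, z). (z, y)) q))"
      unfolding nu_D by (rule bind_distr'[OF swm _ Phim D1ne]) simp
    also have "\<dots> = ?\<mu> \<bind> (\<lambda>a. distr (Q1 a) (MY \<Otimes>\<^sub>M borel) (\<lambda>b. (a, b)) \<bind> (\<lambda>q. Phi ((\<lambda>(y, z). (z, y)) q)))"
      unfolding D1 by (rule bind_assoc'[OF smu]) measurable
    also have "\<dots> = ?\<mu> \<bind> (\<lambda>y. distr (K' y) (MY \<Otimes>\<^sub>M borel) (\<lambda>z. (y, z)))"
    proof (rule bind_cong[OF refl])
      fix y assume "y \<in> space ?\<mu>"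
      then have y: "y \<in> space MY" using spmu by simp
      have "distr (Q1 y) (MY \<Otimes>\<^sub>M borel) (\<lambda>b. (y, b)) \<bind> (\<lambda>q. Phi ((\<lambda>(y, z). (z, y)) q))
          = Q1 y \<bind> (\<lambda>z. Phi ((\<lambda>(y, z). (z, y)) (y, z)))"
        by (rule bind_distr'[of _ borel]) (use y in \<open>simp_all add: in_prob_algebra[OF Q1m y]\<close>, measurable)
      also have "\<dots> = Q1 y \<bind> (\<lambda>z. R (z, y) \<bind> (\<lambda>w. distr (H w) (MY \<Otimes>\<^sub>M borel) (\<lambda>z'. (y, z'))))"
        unfolding Phi_def Psi_def by simp
      also have "\<dots> = Q1 y \<bind> (\<lambda>z. distr (R (z, y) \<bind> H) (MY \<Otimes>\<^sub>M borel) (\<lambda>z'. (y, z')))"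
      proof (rule bind_cong[OF refl])
        fix z assume "z \<in> space (Q1 y)"
        then have z: "(z, y) \<in> space (borel \<Otimes>\<^sub>M MY)" using y in_prob_algebra(3)[OF Q1m y]
          by (simp add: space_pair_measure)
        show "R (z, y) \<bind> (\<lambda>w. distr (H w) (MY \<Otimes>\<^sub>M borel) (\<lambda>z'. (y, z'))) = distr (R (z, y) \<bind> H) (MY \<Otimes>\<^sub>M borel) (\<lambda>z'. (y, z'))"
          by (rule distr_bind'[of _ MW, symmetric]) (use z y in \<open>simp_all add: in_prob_algebra[OF Rm z] in_prob_algebra(4)[OF Rm z, unfolded in_prob_algebra(3)[OF Rm z]]\<close>, measurable)
      qed
      also have "\<dots> = distr (K' y) (MY \<Otimes>\<^sub>M borel) (\<lambda>z. (y, z))"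
        unfolding K'_def
        by (rule distr_bind'[of _ borel, symmetric]) (use y in \<open>simp_all add: in_prob_algebra[OF Q1m y]\<close>, measurable)
      finally show "distr (Q1 y) (MY \<Otimes>\<^sub>M borel) (\<lambda>b. (y, b)) \<bind> (\<lambda>q. Phi ((\<lambda>(y, z). (z, y)) q))
          = distr (K' y) (MY \<Otimes>\<^sub>M borel) (\<lambda>z. (y, z))" .
    qed
    finally show ?thesis .
  qed
  have "AE y in ?\<mu>. K' y = Q2 y"
    by (rule disint_unique[OF _ smu K'm Q2m]) (use musp chainA chainB D2 in \<open>auto simp: space_prob_algebra\<close>)
  then show ?thesis unfolding K'_def .
qed




theorem proposition2:
  fixes P :: "(real ^ 'n) measure"
    and MY :: "'y measure"
    and Ky :: "real ^ 'n \<Rightarrow> 'y measure"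
    and E :: "real ^ 'n \<Rightarrow> real ^ 'k"
    and \<sigma> :: "'t \<Rightarrow> real"
    and t1 t2 :: 't
    and Q1 Q2 :: "'y \<Rightarrow> (real ^ 'k) measure"
    and R :: "(real ^ 'k) \<times> 'y \<Rightarrow> (real ^ 'n) measure"
    and R0 :: "(real ^ 'k) \<times> 'y \<Rightarrow> (real ^ 'k) measure"
  assumes P: "prob_space P" "sets P = sets borel"
    and Ky: "Ky \<in> borel \<rightarrow>\<^sub>M prob_algebra MY"
    and E: "E \<in> borel_measurable borel"
    and \<sigma>: "\<And>t. \<sigma> t \<ge> 0"
    and Q1: "cond_kernel MY borel
               (distr (joint3 P MY Ky E (\<sigma> t1)) (MY \<Otimes>\<^sub>M borel) (\<lambda>(x, y, z). (y, z))) Q1"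
    and Q2: "cond_kernel MY borel
               (distr (joint3 P MY Ky E (\<sigma> t2)) (MY \<Otimes>\<^sub>M borel) (\<lambda>(x, y, z). (y, z))) Q2"
    and R: "cond_kernel (borel \<Otimes>\<^sub>M MY) borel
              (distr (joint3 P MY Ky E (\<sigma> t1)) ((borel \<Otimes>\<^sub>M MY) \<Otimes>\<^sub>M borel)
                 (\<lambda>(x, y, z). ((z, y), x))) R"
    and R0: "cond_kernel (borel \<Otimes>\<^sub>M MY) borel
              (distr (joint3 P MY Ky E (\<sigma> t1)) ((borel \<Otimes>\<^sub>M MY) \<Otimes>\<^sub>M borel)
                 (\<lambda>(x, y, z). ((z, y), E x))) R0"
  shows "AE y in P \<bind> Ky.
           (Q1 y \<bind> (\<lambda>z1. R (z1, y) \<bind> (\<lambda>x0. gauss (E x0) (\<sigma> t2)))) = Q2 y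
         \<and> (Q1 y \<bind> (\<lambda>z1. R0 (z1, y) \<bind> (\<lambda>z0. gauss z0 (\<sigma> t2)))) = Q2 y"
proof -
  note E[measurable]
  have Hi: "(\<lambda>x0. gauss (E x0) (\<sigma> t2)) \<in> (borel :: (real^'n) measure) \<rightarrow>\<^sub>M prob_algebra borel"
    by measurable
  have Hii: "(\<lambda>z0. gauss z0 (\<sigma> t2)) \<in> (borel :: (real^'k) measure) \<rightarrow>\<^sub>M prob_algebra borel"
    by measurable
  have idm: "(\<lambda>x. x) \<in> (borel :: (real^'n) measure) \<rightarrow>\<^sub>M borel" by simp
  have 1: "AE y in P \<bind> Ky. (Q1 y \<bind> (\<lambda>z1. R (z1, y) \<bind> (\<lambda>x0. gauss (E x0) (\<sigma> t2)))) = Q2 y"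
    by (rule main_generic[OF P Ky E idm Hi _ Q1 Q2 R]) simp
  have 2: "AE y in P \<bind> Ky. (Q1 y \<bind> (\<lambda>z1. R0 (z1, y) \<bind> (\<lambda>z0. gauss z0 (\<sigma> t2)))) = Q2 y"
    by (rule main_generic[OF P Ky E E Hii _ Q1 Q2 R0]) simp
  show ?thesis using 1 2 by (rule AE_conjI)
qed


end
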